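(* Let $D$ be a division ring. Then the only partial ideals of $D$ are $0$ and $D$.
   Context: For a ring $R$, a partial ideal is a subset $I\subseteq R$ such that for all $a,b\in R$ with $ab=ba$: if $a,b\in I$ then $a+b\in I$, and if $b\in I$ then $ab\in I$. *)

theory Defs
  imports Main
begin

text \<open>Nonemptiness is required (as for ideals); otherwise the empty set would be a counterexample.\<close>
definition partial_ideal :: "'a::ring set \<Rightarrow> bool" where
  "partial_ideal I \<longleftrightarrow> I \<noteq> {} \<and>
     (\<forall>a b. a * b = b * a \<longrightarrow>
        ((a \<in> I \<and> b \<in> I \<longrightarrow> a + b \<in> I) \<and> (b \<in> I \<longrightarrow> a * b \<in> I)))"

end

theory Submission
  imports Defs
begin

theorem proposition2p7:
  fixes I :: "'a::division_ring set"
  assumes "partial_ideal I"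
  shows "I = {0} \<or> I = UNIV"
proof -
  have ne: "I \<noteq> {}" and cl: "\<And>a b. a * b = b * a \<Longrightarrow> b \<in> I \<Longrightarrow> a * b \<in> I"
    using assms unfolding partial_ideal_def by blast+
  obtain c where c: "c \<in> I" using ne by blast
  have z: "0 \<in> I" using cl[of 0 c] c by simp
  show ?thesis
  proof (cases "\<exists>b\<in>I. b \<noteq> 0")
    case True
    then obtain b where b: "b \<in> I" "b \<noteq> 0" by blast
    have "inverse b * b = b * inverse b" using b by simp
    hence "inverse b * b \<in> I" using cl b by blast
    hence one: "1 \<in> I" using b by simp
    have "\<And>a. a \<in> I" proof -
      fix a :: 'a have "a * 1 \<in> I" using cl[of a 1] one by simp
      thus "a \<in> I" by simp
    qed
    thus ?thesis by blast
  next
    case False thus ?thesis using z by blast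
  qed
qed

end
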